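(* Let $S$ be a $0$-left cancellative semigroup equipped with a homogeneous $N$-valued length function $\ell$. Let $r\in S$ and let $\sigma$ be an unbounded string with $\sigma\cap rS\neq\emptyset$. Then: (i) $r^{-1}*\sigma=\{t\in S: rt\in\sigma\}$ is unbounded; (ii) if $\mu$ is a string with $r^{-1}*\sigma\subseteq\mu$, then $rx\neq0$ for every $x\in\mu$; (iii) if $\sigma$ is a maximal string, then $r^{-1}*\sigma$ is also a maximal string.
   Context: $S$ has zero $0$, $S'=S\setminus\{0\}$; $0$-left cancellative: $st=sr\neq0\Rightarrow t=r$. $\tilde S=S\cup\{1\}$ ($1$ an adjoined identity); $s\mid t$ means $t\in s\tilde S$. A string is a nonempty $\sigma\subseteq S$ with $0\notin\sigma$, closed under divisors, and in which any two elements have a common multiple in $\sigma$; maximal means not properly contained in another string. Let $N$ be a totally ordered set. An $N$-valued length function is $\ell:S'\to N$ such that for $r,s,t\in S'$: (a) $s\mid t\Rightarrow\ell(s)\le\ell(t)$; (b) if $r\mid st\neq0$ and $\ell(r)\le\ell(s)$ then $r\mid s$. A set $X\subseteq S'$ is bounded if $\ell(s)\le n_0$ for all $s\in X$, for some $n_0\in N$. $\ell$ is homogeneous if for every $r\in S$ and every bounded $X\subseteq\{x\in S':rx\neq0\}$, the set $rX$ is bounded. *)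

theory Defs
  imports Main
begin

text \<open>S is modelled as a type 'a of class semigroup_mult with a zero element
(class mult_zero: 0 * a = 0 = a * 0). S' = S - {0}.\<close>

definition zero_left_cancellative :: "('a::{semigroup_mult,mult_zero}) itself \<Rightarrow> bool" where
  "zero_left_cancellative _ \<longleftrightarrow> (\<forall>s t r::'a. s * t = s * r \<and> s * t \<noteq> 0 \<longrightarrow> t = r)"

text \<open>s divides t: t \<in> s (S with adjoined identity), i.e. t = s or t = s u.\<close>
definition sdvd :: "'a::semigroup_mult \<Rightarrow> 'a \<Rightarrow> bool" where
  "sdvd s t \<longleftrightarrow> t = s \<or> (\<exists>u. t = s * u)"

definition is_string :: "('a::{semigroup_mult,mult_zero}) set \<Rightarrow> bool" where
  "is_string \<sigma> \<longleftrightarrow> \<sigma> \<noteq> {} \<and> 0 \<notin> \<sigma>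
     \<and> (\<forall>s t. t \<in> \<sigma> \<and> sdvd s t \<longrightarrow> s \<in> \<sigma>)
     \<and> (\<forall>a\<in>\<sigma>. \<forall>b\<in>\<sigma>. \<exists>c\<in>\<sigma>. sdvd a c \<and> sdvd b c)"

definition is_maximal_string :: "('a::{semigroup_mult,mult_zero}) set \<Rightarrow> bool" where
  "is_maximal_string \<sigma> \<longleftrightarrow> is_string \<sigma> \<and> (\<forall>\<tau>. is_string \<tau> \<and> \<sigma> \<subseteq> \<tau> \<longrightarrow> \<tau> = \<sigma>)"

text \<open>N-valued length function; only its values on S' matter.\<close>
definition length_function :: "('a::{semigroup_mult,mult_zero} \<Rightarrow> 'n::linorder) \<Rightarrow> bool" where
  "length_function len \<longleftrightarrow>
     (\<forall>s t. s \<noteq> 0 \<and> t \<noteq> 0 \<and> sdvd s t \<longrightarrow> len s \<le> len t)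
   \<and> (\<forall>r s t. r \<noteq> 0 \<and> s \<noteq> 0 \<and> t \<noteq> 0 \<and> s * t \<noteq> 0 \<and> sdvd r (s * t) \<and> len r \<le> len s
        \<longrightarrow> sdvd r s)"

definition bounded_by :: "('a::{semigroup_mult,mult_zero} \<Rightarrow> 'n::linorder) \<Rightarrow> 'a set \<Rightarrow> bool" where
  "bounded_by len X \<longleftrightarrow> (\<exists>n0. \<forall>s\<in>X. len s \<le> n0)"

definition homogeneous :: "('a::{semigroup_mult,mult_zero} \<Rightarrow> 'n::linorder) \<Rightarrow> bool" where
  "homogeneous len \<longleftrightarrow> (\<forall>r X. X \<subseteq> {x. x \<noteq> 0 \<and> r * x \<noteq> 0} \<and> bounded_by len X
        \<longrightarrow> bounded_by len ((\<lambda>x. r * x) ` X))"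

definition left_quot :: "'a::semigroup_mult \<Rightarrow> 'a set \<Rightarrow> 'a set" where
  "left_quot r \<sigma> = {t. r * t \<in> \<sigma>}"

end

theory Submission
  imports Defs
begin

lemma sdvd_refl[simp]: "sdvd a a" by (simp add: sdvd_def)
lemma sdvd_mult[simp]: "sdvd a (a*u)" by (auto simp: sdvd_def)
lemma sdvd_trans: "sdvd a b \<Longrightarrow> sdvd b c \<Longrightarrow> sdvd a c"
  unfolding sdvd_def by (metis mult.assoc)
lemma sdvd_mult_left: "sdvd a b \<Longrightarrow> sdvd (r*a) (r*b)"
  unfolding sdvd_def by (metis mult.assoc)
lemma sdvd_zero: "sdvd (0::'a::{semigroup_mult,mult_zero}) y \<Longrightarrow> y = 0"
  unfolding sdvd_def by auto
lemma sdvd_nz: "sdvd (x::'a::{semigroup_mult,mult_zero}) y \<Longrightarrow> r*y \<noteq> 0 \<Longrightarrow> r*x \<noteq> 0"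
  unfolding sdvd_def by (metis mult.assoc mult_zero_left)

theorem lemma13p3:
  fixes len :: "'a::{semigroup_mult,mult_zero} \<Rightarrow> 'n::linorder"
    and r :: 'a and \<sigma> :: "'a set"
  assumes "zero_left_cancellative TYPE('a)"
    and "length_function len"
    and "homogeneous len"
    and "is_string \<sigma>"
    and "\<not> bounded_by len \<sigma>"
    and "\<sigma> \<inter> (\<lambda>t. r * t) ` UNIV \<noteq> {}"
  shows "(\<not> bounded_by len (left_quot r \<sigma>))
    \<and> (\<forall>\<mu>. is_string \<mu> \<and> left_quot r \<sigma> \<subseteq> \<mu> \<longrightarrow> (\<forall>x\<in>\<mu>. r * x \<noteq> 0))
    \<and> (is_maximal_string \<sigma> \<longrightarrow> is_maximal_string (left_quot r \<sigma>))"
proof -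
  note canc = assms(1)[unfolded zero_left_cancellative_def]
  have mono: "\<And>s t. s \<noteq> 0 \<Longrightarrow> t \<noteq> 0 \<Longrightarrow> sdvd s t \<Longrightarrow> len s \<le> len t"
    using assms(2) unfolding length_function_def by blast
  have lb: "\<And>r s t. r \<noteq> 0 \<Longrightarrow> s \<noteq> 0 \<Longrightarrow> t \<noteq> 0 \<Longrightarrow> s * t \<noteq> 0 \<Longrightarrow> sdvd r (s * t) \<Longrightarrow> len r \<le> len s
        \<Longrightarrow> sdvd r s"
    using assms(2) unfolding length_function_def by blast
  have s0: "0 \<notin> \<sigma>" and sdc: "\<And>s t. t \<in> \<sigma> \<Longrightarrow> sdvd s t \<Longrightarrow> s \<in> \<sigma>"
    and scm: "\<And>a b. a\<in>\<sigma> \<Longrightarrow> b\<in>\<sigma> \<Longrightarrow> \<exists>c\<in>\<sigma>. sdvd a c \<and> sdvd b c"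
    using assms(4) unfolding is_string_def by blast+
  obtain t0 where t0: "r*t0 \<in> \<sigma>" using assms(6) by auto
  have rs: "r \<in> \<sigma>" using sdc[OF t0] by simp
  have r0: "r \<noteq> 0" using rs s0 by auto
  define X where "X = left_quot r \<sigma>"
  have Xi: "x \<in> X \<longleftrightarrow> r*x \<in> \<sigma>" for x by (simp add: X_def left_quot_def)
  have Xnz: "x \<in> X \<Longrightarrow> x \<noteq> 0 \<and> r*x \<noteq> 0" for x
    using Xi s0 by (metis mult_zero_right)
  have i: "\<not> bounded_by len X"
  proof
    assume b: "bounded_by len X"
    have "bounded_by len ((\<lambda>x. r * x) ` X)"
      using assms(3) b Xnz unfolding homogeneous_def by blast
    then obtain n1 where n1: "\<And>x. x \<in> X \<Longrightarrow> len (r*x) \<le> n1"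
      unfolding bounded_by_def by auto
    obtain s where s: "s \<in> \<sigma>" "\<not> len s \<le> n1"
      using assms(5) unfolding bounded_by_def by auto
    obtain c where c: "c \<in> \<sigma>" "sdvd r c" "sdvd s c" using scm[OF rs s(1)] by blast
    have "len s \<le> len c" using mono s0 s c by metis
    hence cl: "\<not> len c \<le> n1" using s by auto
    show False
    proof (cases "c = r")
      case True
      have "len r \<le> len (r*t0)" using mono r0 t0 s0 by (metis sdvd_mult)
      also have "\<dots> \<le> n1" using n1 Xi t0 by blast
      finally show False using cl True by simp
    next
      case False
      then obtain u where "c = r*u" using c(2) unfolding sdvd_def by auto
      thus False using n1 Xi c(1) cl by blast
    qed
  qed
  have ii: "\<forall>x\<in>\<mu>. r * x \<noteq> 0" if mu: "is_string \<mu>" "X \<subseteq> \<mu>" for \<mu>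
  proof
    fix x assume x: "x \<in> \<mu>"
    have m0: "0 \<notin> \<mu>" and mcm: "\<And>a b. a\<in>\<mu> \<Longrightarrow> b\<in>\<mu> \<Longrightarrow> \<exists>c\<in>\<mu>. sdvd a c \<and> sdvd b c"
      using mu(1) unfolding is_string_def by blast+
    obtain y where y: "y \<in> X" "\<not> len y \<le> len x"
      using i unfolding bounded_by_def by auto
    have ym: "y \<in> \<mu>" using y mu by auto
    obtain c where c: "c \<in> \<mu>" "sdvd x c" "sdvd y c" using mcm[OF x ym] by blast
    have xy: "sdvd x y"
    proof (cases "c = y")
      case True thus ?thesis using c by simp
    next
      case False
      then obtain v where v: "c = y*v" using c(3) unfolding sdvd_def by auto
      have "c \<noteq> 0" using c m0 by auto
      hence "v \<noteq> 0" using v by auto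
      show ?thesis
        using lb[of x y v] x m0 Xnz[OF y(1)] \<open>v\<noteq>0\<close> \<open>c\<noteq>0\<close> v c(2) y(2) by (metis le_cases)
    qed
    show "r*x \<noteq> 0" using sdvd_nz[OF xy] Xnz[OF y(1)] by blast
  qed
  have Xstr: "is_string X"
    unfolding is_string_def
  proof (intro conjI allI impI ballI)
    show "X \<noteq> {}" using t0 Xi by auto
    show "0 \<notin> X" using Xnz by auto
    fix s t assume "t \<in> X \<and> sdvd s t"
    thus "s \<in> X" using Xi sdc sdvd_mult_left by metis
  next
    fix a b assume ab: "a \<in> X" "b \<in> X"
    obtain c where c: "c \<in> \<sigma>" "sdvd (r*a) c" "sdvd (r*b) c" using scm ab Xi by blast
    obtain a' where a': "c = r*a'" "sdvd a a'"
      using c(2) unfolding sdvd_def by (metis mult.assoc sdvd_refl sdvd_mult)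
    obtain b' where b': "c = r*b'" "sdvd b b'"
      using c(3) unfolding sdvd_def by (metis mult.assoc sdvd_refl sdvd_mult)
    have "a' = b'" using canc a' b' c(1) s0 by metis
    thus "\<exists>c\<in>X. sdvd a c \<and> sdvd b c" using a' b' c(1) Xi by auto
  qed
  have iii: "is_maximal_string X" if ms: "is_maximal_string \<sigma>"
    unfolding is_maximal_string_def
  proof (intro conjI allI impI)
    show "is_string X" by (rule Xstr)
    fix \<mu> assume mu: "is_string \<mu> \<and> X \<subseteq> \<mu>"
    have mcm: "\<And>a b. a\<in>\<mu> \<Longrightarrow> b\<in>\<mu> \<Longrightarrow> \<exists>c\<in>\<mu>. sdvd a c \<and> sdvd b c"
      using mu unfolding is_string_def by blast+
    have rx: "\<forall>x\<in>\<mu>. r*x \<noteq> 0" using ii mu by blast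
    define \<tau> where "\<tau> = {s. \<exists>x\<in>\<mu>. sdvd s (r*x)}"
    have t0m: "t0 \<in> \<mu>" using mu t0 Xi by auto
    have tstr: "is_string \<tau>" unfolding is_string_def
    proof (intro conjI allI impI ballI)
      show "\<tau> \<noteq> {}" using t0m \<tau>_def sdvd_refl by blast
      show "0 \<notin> \<tau>" using rx sdvd_zero \<tau>_def by auto
      fix s t assume "t \<in> \<tau> \<and> sdvd s t"
      thus "s \<in> \<tau>" using \<tau>_def sdvd_trans by auto
    next
      fix a b assume "a \<in> \<tau>" "b \<in> \<tau>"
      then obtain x1 x2 where x: "x1 \<in> \<mu>" "x2 \<in> \<mu>" "sdvd a (r*x1)" "sdvd b (r*x2)"
        using \<tau>_def by auto
      obtain x3 where "x3 \<in> \<mu>" "sdvd x1 x3" "sdvd x2 x3" using mcm x by blast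
      thus "\<exists>c\<in>\<tau>. sdvd a c \<and> sdvd b c" using x \<tau>_def sdvd_trans sdvd_mult_left
        by (metis (mono_tags, lifting) mem_Collect_eq sdvd_refl)
    qed
    have "\<sigma> \<subseteq> \<tau>"
    proof
      fix s assume s: "s \<in> \<sigma>"
      obtain c where c: "c \<in> \<sigma>" "sdvd r c" "sdvd s c" using scm[OF rs s] by blast
      show "s \<in> \<tau>"
      proof (cases "c = r")
        case True
        have "sdvd s (r*t0)" using c True sdvd_trans sdvd_mult by metis
        thus ?thesis using t0m \<tau>_def by auto
      next
        case False
        then obtain u where "c = r*u" using c(2) unfolding sdvd_def by auto
        moreover have "u \<in> \<mu>" using calculation c mu Xi by auto
        ultimately show ?thesis using c \<tau>_def by auto
      qed
    qed
    hence "\<tau> = \<sigma>" using ms tstr unfolding is_maximal_string_def by blast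
    hence "\<mu> \<subseteq> X" using Xi \<tau>_def sdvd_refl by blast
    thus "\<mu> = X" using mu by auto
  qed
  show ?thesis using i ii iii X_def by blast
qed

end
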